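(* Let $(\Omega,\mathcal A)$ be a measurable space, let $K\subset\mathbb C^n$ be compact and let $A$ be a uniform algebra on $K$ whose maximal ideal space is a separable metric space. Let $f:\Omega\times K\to\mathbb C$ satisfy $f(\omega,\cdot)\in A$ for all $\omega$ and $f(\cdot,z)$ measurable for all $z\in K$. Then the map $\omega\mapsto\sigma(f(\omega,\cdot))$ is a random compact set in $\mathbb C$.
   Context: For $h\in A$, $\sigma(h)=\{\lambda\in\mathbb C:\lambda-h \text{ is not invertible in } A\}$. $\mathcal K'(\mathbb C)$ is the space of non-empty compact subsets of $\mathbb C$ with the Hausdorff distance and its Borel $\sigma$-algebra; a random compact set in $\mathbb C$ is a measurable map $\Omega\to\mathcal K'(\mathbb C)$. *)

theory Defs
  imports "HOL-Analysis.Analysis" "HOL-Probability.Probability"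
begin

text \<open>Elements of a function algebra on K are represented as functions that vanish
  outside K (so that a function on K has a unique representative).\<close>

definition restrictK :: "'a set \<Rightarrow> ('a \<Rightarrow> complex) \<Rightarrow> ('a \<Rightarrow> complex)" where
  "restrictK K g = (\<lambda>z. if z \<in> K then g z else 0)"

definition uniform_algebra :: "'a::topological_space set \<Rightarrow> ('a \<Rightarrow> complex) set \<Rightarrow> bool" where
  "uniform_algebra K A \<longleftrightarrow>
     K \<noteq> {} \<and> compact K \<and>
     (\<forall>g\<in>A. continuous_on K g \<and> (\<forall>z. z \<notin> K \<longrightarrow> g z = 0)) \<and>
     restrictK K (\<lambda>_. 1) \<in> A \<and>
     (\<forall>g\<in>A. \<forall>h\<in>A. (\<lambda>z. g z + h z) \<in> A) \<and>
     (\<forall>g\<in>A. \<forall>h\<in>A. (\<lambda>z. g z * h z) \<in> A) \<and>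
     (\<forall>c. \<forall>g\<in>A. (\<lambda>z. c * g z) \<in> A) \<and>
     (\<forall>x\<in>K. \<forall>y\<in>K. x \<noteq> y \<longrightarrow> (\<exists>g\<in>A. g x \<noteq> g y)) \<and>
     \<comment> \<open>closed in the supremum norm on K\<close>
     (\<forall>G g. (\<forall>n. G n \<in> A) \<and> (\<forall>z. z \<notin> K \<longrightarrow> g z = 0) \<and>
            uniform_limit K G g sequentially \<longrightarrow> g \<in> A)"

definition invertible_in :: "'a set \<Rightarrow> ('a \<Rightarrow> complex) set \<Rightarrow> ('a \<Rightarrow> complex) \<Rightarrow> bool" where
  "invertible_in K A h \<longleftrightarrow> (\<exists>g\<in>A. (\<lambda>z. h z * g z) = restrictK K (\<lambda>_. 1))"

definition spectrum_in :: "'a set \<Rightarrow> ('a \<Rightarrow> complex) set \<Rightarrow> ('a \<Rightarrow> complex) \<Rightarrow> complex set" where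
  "spectrum_in K A h = {l. \<not> invertible_in K A (restrictK K (\<lambda>z. l - h z))}"

text \<open>Characters: nonzero multiplicative linear functionals A \<rightarrow> \<complex>, represented as
  functions on A that are \<open>undefined\<close> off A (as for the product topology).\<close>

definition characters :: "'a set \<Rightarrow> ('a \<Rightarrow> complex) set \<Rightarrow> (('a \<Rightarrow> complex) \<Rightarrow> complex) set" where
  "characters K A = {\<phi>. \<phi> \<in> extensional A \<and>
      (\<forall>g\<in>A. \<forall>h\<in>A. \<phi> (\<lambda>z. g z + h z) = \<phi> g + \<phi> h) \<and>
      (\<forall>c. \<forall>g\<in>A. \<phi> (\<lambda>z. c * g z) = c * \<phi> g) \<and>
      (\<forall>g\<in>A. \<forall>h\<in>A. \<phi> (\<lambda>z. g z * h z) = \<phi> g * \<phi> h) \<and>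
      (\<exists>g\<in>A. \<phi> g \<noteq> 0)}"

definition gelfand_topology :: "'a set \<Rightarrow> ('a \<Rightarrow> complex) set \<Rightarrow> (('a \<Rightarrow> complex) \<Rightarrow> complex) topology" where
  "gelfand_topology K A = subtopology (product_topology (\<lambda>_. euclidean) A) (characters K A)"

definition nonempty_compacts :: "complex set set" where
  "nonempty_compacts = {X. X \<noteq> {} \<and> compact X}"

definition hausdist :: "complex set \<Rightarrow> complex set \<Rightarrow> real" where
  "hausdist X Y = max (SUP x\<in>X. infdist x Y) (SUP y\<in>Y. infdist y X)"

definition hausdorff_open :: "complex set set \<Rightarrow> bool" where
  "hausdorff_open U \<longleftrightarrow> U \<subseteq> nonempty_compacts \<and>
     (\<forall>X\<in>U. \<exists>e>0. \<forall>Y\<in>nonempty_compacts. hausdist X Y < e \<longrightarrow> Y \<in> U)"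

definition hausdorff_borel :: "complex set measure" where
  "hausdorff_borel = sigma nonempty_compacts {U. hausdorff_open U}"

definition random_compact_set :: "'w measure \<Rightarrow> ('w \<Rightarrow> complex set) \<Rightarrow> bool" where
  "random_compact_set M F \<longleftrightarrow> F \<in> measurable M hausdorff_borel"

end

theory Submission
  imports Defs
begin


lemma ua_ne:
  assumes "uniform_algebra K A"
  shows "K \<noteq> {}"
  using assms unfolding uniform_algebra_def by (elim conjE) assumption

lemma ua_compact:
  assumes "uniform_algebra K A"
  shows "compact K"
  using assms unfolding uniform_algebra_def by (elim conjE) assumption

lemma ua_cz:
  assumes "uniform_algebra K A"
  shows "\<forall>g\<in>A. continuous_on K g \<and> (\<forall>z. z \<notin> K \<longrightarrow> g z = 0)"
  using assms unfolding uniform_algebra_def by (elim conjE) assumption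

lemma ua_one:
  assumes "uniform_algebra K A"
  shows "restrictK K (\<lambda>_. 1) \<in> A"
  using assms unfolding uniform_algebra_def by (elim conjE) assumption

lemma ua_add0:
  assumes "uniform_algebra K A"
  shows "\<forall>g\<in>A. \<forall>h\<in>A. (\<lambda>z. g z + h z) \<in> A"
  using assms unfolding uniform_algebra_def by (elim conjE) assumption

lemma ua_mult0:
  assumes "uniform_algebra K A"
  shows "\<forall>g\<in>A. \<forall>h\<in>A. (\<lambda>z. g z * h z) \<in> A"
  using assms unfolding uniform_algebra_def by (elim conjE) assumption

lemma ua_smult0:
  assumes "uniform_algebra K A"
  shows "\<forall>c. \<forall>g\<in>A. (\<lambda>z. c * g z) \<in> A"
  using assms unfolding uniform_algebra_def by (elim conjE) assumption

lemma ua_closed0: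
  assumes "uniform_algebra K A"
  shows "\<forall>G g. (\<forall>n. G n \<in> A) \<and> (\<forall>z. z \<notin> K \<longrightarrow> g z = 0) \<and>
            uniform_limit K G g sequentially \<longrightarrow> g \<in> A"
  using assms unfolding uniform_algebra_def by (elim conjE) assumption

lemma ua_cont: "uniform_algebra K A \<Longrightarrow> g \<in> A \<Longrightarrow> continuous_on K g"
  using ua_cz by blast
lemma ua_zero: "uniform_algebra K A \<Longrightarrow> g \<in> A \<Longrightarrow> z \<notin> K \<Longrightarrow> g z = 0"
  using ua_cz by blast
lemma ua_add: "uniform_algebra K A \<Longrightarrow> g \<in> A \<Longrightarrow> h \<in> A \<Longrightarrow> (\<lambda>z. g z + h z) \<in> A"
  using ua_add0 by blast
lemma ua_mult: "uniform_algebra K A \<Longrightarrow> g \<in> A \<Longrightarrow> h \<in> A \<Longrightarrow> (\<lambda>z. g z * h z) \<in> A"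
  using ua_mult0 by blast
lemma ua_smult: "uniform_algebra K A \<Longrightarrow> g \<in> A \<Longrightarrow> (\<lambda>z. c * g z) \<in> A"
  using ua_smult0 by blast
lemma ua_closed: "uniform_algebra K A \<Longrightarrow> (\<And>n. G n \<in> A) \<Longrightarrow> (\<And>z. z \<notin> K \<Longrightarrow> g z = 0) \<Longrightarrow>
            uniform_limit K G g sequentially \<Longrightarrow> g \<in> A"
  using ua_closed0[of K A] by blast



lemma ua_eq_on:
  assumes "uniform_algebra K A" "g \<in> A" "\<And>z. z \<in> K \<Longrightarrow> h z = g z" "\<And>z. z \<notin> K \<Longrightarrow> h z = 0"
  shows "h \<in> A"
proof -
  have "h = g"
  proof
    fix z show "h z = g z"
      using assms(3,4)[of z] ua_zero[OF assms(1,2), of z] by (cases "z \<in> K") auto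
  qed
  then show ?thesis using assms by simp
qed

lemma ua_bounded:
  assumes "uniform_algebra K A" "g \<in> A"
  obtains B where "B > 0" "\<And>z. z \<in> K \<Longrightarrow> cmod (g z) \<le> B"
proof -
  have "compact (g ` K)" using ua_compact[OF assms(1)] ua_cont[OF assms] compact_continuous_image by blast
  then obtain B0 where "\<forall>x\<in>g ` K. norm x \<le> B0" using compact_imp_bounded bounded_iff by metis
  then show ?thesis using that[of "max B0 1"] by force
qed

lemma restrictK_sub_in:
  assumes "uniform_algebra K A" "h \<in> A"
  shows "restrictK K (\<lambda>z. l - h z) \<in> A"
proof -
  have "(\<lambda>z. l * restrictK K (\<lambda>_. 1) z + (-1) * h z) \<in> A"
    by (rule ua_add[OF assms(1)] ua_smult[OF assms(1)] ua_one[OF assms(1)] assms(2))+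
  then show ?thesis
    by (rule ua_eq_on[OF assms(1)]) (auto simp: restrictK_def ua_zero[OF assms])
qed

lemma neumann_inv:
  assumes ua: "uniform_algebra K A" and u: "u \<in> A" and w: "w \<in> A"
    and q: "q < 1" and bd: "\<And>z. z \<in> K \<Longrightarrow> cmod (1 - w z * u z) \<le> q"
  shows "invertible_in K A u"
proof -
  define e where "e = restrictK K (\<lambda>_. 1::complex)"
  define r where "r = (\<lambda>z. e z + (-1) * (w z * u z))"
  have e: "e \<in> A" using ua_one[OF ua] e_def by simp
  have rA: "r \<in> A" unfolding r_def
    by (rule ua_add[OF ua] ua_smult[OF ua] ua_mult[OF ua] e u w)+
  define S where "S n = restrictK K (\<lambda>z. \<Sum>i<n. (1 - w z * u z)^i)" for n
  have SA: "S n \<in> A" for n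
  proof (induction n)
    case 0
    have "(\<lambda>z. 0 * e z) \<in> A" using ua_smult[OF ua e] .
    then show ?case by (rule ua_eq_on[OF ua]) (auto simp: S_def restrictK_def)
  next
    case (Suc n)
    have "(\<lambda>z. e z + r z * S n z) \<in> A"
      by (rule ua_add[OF ua] ua_mult[OF ua] e rA Suc)+
    then show ?case
    proof (rule ua_eq_on[OF ua])
      fix z assume "z \<in> K"
      then show "S (Suc n) z = e z + r z * S n z"
        by (simp del: sum.lessThan_Suc add: S_def restrictK_def e_def r_def sum.lessThan_Suc_shift sum_distrib_left)
    qed (simp add: S_def restrictK_def)
  qed
  have q0: "0 \<le> q"
  proof -
    obtain z where "z \<in> K" using ua_ne[OF ua] by blast
    then show ?thesis using bd[of z] norm_ge_zero[of "1 - w z * u z"] by linarith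
  qed
  have k0: "w z * u z \<noteq> 0" and kb: "1 - q \<le> cmod (w z * u z)" if "z \<in> K" for z
  proof -
    have "1 - cmod (w z * u z) \<le> cmod (1 - w z * u z)"
      by (metis norm_one norm_triangle_ineq2)
    then show "1 - q \<le> cmod (w z * u z)" using bd[OF that] by linarith
    then show "w z * u z \<noteq> 0" using q by auto
  qed
  define g where "g = restrictK K (\<lambda>z. 1 / (w z * u z))"
  have lim: "uniform_limit K S g sequentially"
  proof (rule uniform_limitI)
    fix \<epsilon> :: real assume "\<epsilon> > 0"
    have "(\<lambda>n. q ^ n / (1 - q)) \<longlonglongrightarrow> 0 / (1 - q)"
      using q q0 by (intro tendsto_divide LIMSEQ_power_zero) auto
    then have "\<forall>\<^sub>F n in sequentially. q ^ n / (1 - q) < \<epsilon>"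
      using \<open>\<epsilon> > 0\<close> by (simp add: order_tendstoD(2))
    then show "\<forall>\<^sub>F n in sequentially. \<forall>z\<in>K. dist (S n z) (g z) < \<epsilon>"
    proof eventually_elim
      case (elim n)
      show ?case
      proof
        fix z assume z: "z \<in> K"
        define x where "x = 1 - w z * u z"
        have x1: "x \<noteq> 1" using k0[OF z] x_def by auto
        have Sz: "S n z = (1 - x^n) / (1 - x)"
          using z x1 unfolding S_def restrictK_def x_def[symmetric] by (simp add: sum_gp_strict)
        have gz: "g z = 1 / (1 - x)"
          using z unfolding g_def restrictK_def by (simp add: x_def)
        have "S n z - g z = (1 - x^n) / (1 - x) - 1 / (1 - x)" using Sz gz by simp
        also have "\<dots> = ((1 - x^n) - 1) / (1 - x)" by (simp only: diff_divide_distrib)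
        also have "\<dots> = - (x^n) / (1 - x)" by simp
        finally have eq: "S n z - g z = - (x^n) / (1 - x)" .
        have "cmod (x^n) \<le> q^n" using bd[OF z] q0 by (simp add: x_def norm_power power_mono)
        moreover have "1 - q \<le> cmod (1 - x)" using kb[OF z] by (simp add: x_def)
        ultimately have "cmod (x^n) / cmod (1 - x) \<le> q^n / (1 - q)"
          using q q0 by (intro frac_le) auto
        then show "dist (S n z) (g z) < \<epsilon>" using elim
          by (simp add: dist_norm eq norm_divide)
      qed
    qed
  qed
  have gA: "g \<in> A"
    by (rule ua_closed[OF ua, of S]) (use SA lim in \<open>auto simp: g_def restrictK_def\<close>)
  have "(\<lambda>z. w z * g z) \<in> A" by (rule ua_mult[OF ua w gA])
  moreover have "(\<lambda>z. u z * (w z * g z)) = restrictK K (\<lambda>_. 1)"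
  proof
    fix z show "u z * (w z * g z) = restrictK K (\<lambda>_. 1) z"
      using k0[of z] ua_zero[OF ua u, of z] by (cases "z \<in> K") (auto simp: g_def restrictK_def field_simps)
  qed
  ultimately show ?thesis unfolding invertible_in_def
    by (intro bexI[of _ "\<lambda>z. w z * g z"]) simp_all
qed



lemma spec_contains_values:
  assumes ua: "uniform_algebra K A" and h: "h \<in> A" and z: "z \<in> K"
  shows "h z \<in> spectrum_in K A h"
proof -
  have "\<not> invertible_in K A (restrictK K (\<lambda>y. h z - h y))"
  proof
    assume "invertible_in K A (restrictK K (\<lambda>y. h z - h y))"
    then obtain g where "(\<lambda>y. restrictK K (\<lambda>y. h z - h y) y * g y) = restrictK K (\<lambda>_. 1)"
      unfolding invertible_in_def by blast
    then have "restrictK K (\<lambda>y. h z - h y) z * g z = restrictK K (\<lambda>_. 1) z" by metis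
    then show False using z by (simp add: restrictK_def)
  qed
  then show ?thesis unfolding spectrum_in_def by simp
qed

lemma inv_open:
  assumes ua: "uniform_algebra K A" and h: "h \<in> A"
    and inv: "invertible_in K A (restrictK K (\<lambda>z. l - h z))"
  obtains \<rho> where "\<rho> > 0"
    "\<And>m h'. h' \<in> A \<Longrightarrow> cmod (m - l) \<le> \<rho> \<Longrightarrow> (\<And>z. z \<in> K \<Longrightarrow> cmod (h' z - h z) \<le> \<rho>) \<Longrightarrow>
       invertible_in K A (restrictK K (\<lambda>z. m - h' z))"
proof -
  obtain g where gA: "g \<in> A" and geq: "(\<lambda>y. restrictK K (\<lambda>z. l - h z) y * g y) = restrictK K (\<lambda>_. 1)"
    using inv unfolding invertible_in_def by blast
  have g1: "(l - h z) * g z = 1" if "z \<in> K" for z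
  proof -
    have "restrictK K (\<lambda>z. l - h z) z * g z = restrictK K (\<lambda>_. 1) z" using geq by metis
    then show ?thesis using that by (simp add: restrictK_def)
  qed
  obtain B where B: "B > 0" "\<And>z. z \<in> K \<Longrightarrow> cmod (g z) \<le> B" using ua_bounded[OF ua gA] by blast
  show ?thesis
  proof (rule that[of "1 / (4 * B)"])
    show "1 / (4 * B) > 0" using B by simp
    fix m h' assume h': "h' \<in> A" and m: "cmod (m - l) \<le> 1 / (4 * B)"
      and hh: "\<And>z. z \<in> K \<Longrightarrow> cmod (h' z - h z) \<le> 1 / (4 * B)"
    show "invertible_in K A (restrictK K (\<lambda>z. m - h' z))"
    proof (rule neumann_inv[OF ua restrictK_sub_in[OF ua h'] gA])
      show "(1::real) / 2 < 1" by simp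
      fix z assume z: "z \<in> K"
      have "1 - g z * restrictK K (\<lambda>z. m - h' z) z = g z * ((l - m) + (h' z - h z))"
        using g1[OF z] z by (simp add: restrictK_def algebra_simps)
      also have "cmod \<dots> \<le> B * (1 / (4 * B) + 1 / (4 * B))"
        unfolding norm_mult
      proof (rule mult_mono)
        show "cmod (l - m + (h' z - h z)) \<le> 1 / (4 * B) + 1 / (4 * B)"
          using norm_triangle_ineq[of "l - m" "h' z - h z"] m hh[OF z] norm_minus_commute[of l m]
          by linarith
      qed (use B z in auto)
      also have "\<dots> = 1 / 2" using B by (simp add: field_simps)
      finally show "cmod (1 - g z * restrictK K (\<lambda>z. m - h' z) z) \<le> 1 / 2" .
    qed
  qed
qed

lemma spec_bounded:
  assumes ua: "uniform_algebra K A" and h: "h \<in> A" and B: "\<And>z. z \<in> K \<Longrightarrow> cmod (h z) \<le> B"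
  shows "spectrum_in K A h \<subseteq> cball 0 B"
proof
  fix l assume l: "l \<in> spectrum_in K A h"
  show "l \<in> cball 0 B"
  proof (rule ccontr)
    assume "l \<notin> cball 0 B"
    then have lB: "cmod l > B" by (simp add: dist_norm)
    have B0: "0 \<le> B" using B ua_ne[OF ua] by (meson all_not_in_conv norm_ge_zero order_trans)
    then have l0: "l \<noteq> 0" using lB by auto
    have "invertible_in K A (restrictK K (\<lambda>z. l - h z))"
    proof (rule neumann_inv[OF ua restrictK_sub_in[OF ua h] ua_smult[OF ua ua_one[OF ua], of "1/l"]])
      show "B / cmod l < 1" using lB B0 by (simp add: divide_less_eq)
      fix z assume z: "z \<in> K"
      have "1 - 1 / l * restrictK K (\<lambda>_. 1) z * restrictK K (\<lambda>z. l - h z) z = h z / l"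
        using z l0 by (simp add: restrictK_def field_simps)
      then show "cmod (1 - 1 / l * restrictK K (\<lambda>_. 1) z * restrictK K (\<lambda>z. l - h z) z) \<le> B / cmod l"
        using B[OF z] lB B0 by (simp add: norm_divide divide_right_mono)
    qed
    then show False using l unfolding spectrum_in_def by simp
  qed
qed

lemma spec_closed:
  assumes ua: "uniform_algebra K A" and h: "h \<in> A"
  shows "closed (spectrum_in K A h)"
proof -
  have "open (- spectrum_in K A h)"
    unfolding open_contains_cball
  proof
    fix l assume "l \<in> - spectrum_in K A h"
    then have inv: "invertible_in K A (restrictK K (\<lambda>z. l - h z))" unfolding spectrum_in_def by simp
    obtain \<rho> where \<rho>: "\<rho> > 0"
      "\<And>m h'. h' \<in> A \<Longrightarrow> cmod (m - l) \<le> \<rho> \<Longrightarrow> (\<And>z. z \<in> K \<Longrightarrow> cmod (h' z - h z) \<le> \<rho>) \<Longrightarrow>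
       invertible_in K A (restrictK K (\<lambda>z. m - h' z))"
      using inv_open[OF ua h inv] by blast
    have "cball l \<rho> \<subseteq> - spectrum_in K A h"
    proof
      fix m assume "m \<in> cball l \<rho>"
      then have "cmod (m - l) \<le> \<rho>" by (simp add: dist_norm norm_minus_commute)
      then have "invertible_in K A (restrictK K (\<lambda>z. m - h z))"
        using \<rho>(2)[OF h] \<rho>(1) by simp
      then show "m \<in> - spectrum_in K A h" unfolding spectrum_in_def by simp
    qed
    then show "\<exists>e>0. cball l e \<subseteq> - spectrum_in K A h" using \<rho>(1) by blast
  qed
  then show ?thesis by (simp add: closed_def)
qed

lemma spec_nc:
  assumes ua: "uniform_algebra K A" and h: "h \<in> A"
  shows "spectrum_in K A h \<in> nonempty_compacts"
proof -
  obtain B where B: "B > 0" "\<And>z. z \<in> K \<Longrightarrow> cmod (h z) \<le> B" using ua_bounded[OF ua h] by blast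
  obtain z where "z \<in> K" using ua_ne[OF ua] by blast
  then have "spectrum_in K A h \<noteq> {}" using spec_contains_values[OF ua h] by blast
  moreover have "compact (spectrum_in K A h)"
    using spec_bounded[OF ua h B(2)] spec_closed[OF ua h]
    by (meson bounded_cball bounded_subset compact_eq_bounded_closed)
  ultimately show ?thesis unfolding nonempty_compacts_def by simp
qed



lemma spec_usc:
  assumes ua: "uniform_algebra K A" and h: "h \<in> A" and C: "compact C"
    and dis: "spectrum_in K A h \<inter> C = {}"
  obtains r where "r > 0"
    "\<And>h'. h' \<in> A \<Longrightarrow> (\<And>z. z \<in> K \<Longrightarrow> cmod (h' z - h z) \<le> r) \<Longrightarrow> spectrum_in K A h' \<inter> C = {}"
proof -
  have "\<forall>l\<in>C. \<exists>\<rho>>0. \<forall>m h'. h' \<in> A \<longrightarrow> cmod (m - l) \<le> \<rho> \<longrightarrow> (\<forall>z\<in>K. cmod (h' z - h z) \<le> \<rho>) \<longrightarrow>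
       invertible_in K A (restrictK K (\<lambda>z. m - h' z))"
  proof
    fix l assume "l \<in> C"
    then have inv: "invertible_in K A (restrictK K (\<lambda>z. l - h z))"
      using dis unfolding spectrum_in_def by blast
    obtain \<rho> where "\<rho> > 0"
      "\<And>m h'. h' \<in> A \<Longrightarrow> cmod (m - l) \<le> \<rho> \<Longrightarrow> (\<And>z. z \<in> K \<Longrightarrow> cmod (h' z - h z) \<le> \<rho>) \<Longrightarrow>
       invertible_in K A (restrictK K (\<lambda>z. m - h' z))"
      using inv_open[OF ua h inv] by blast
    then show "\<exists>\<rho>>0. \<forall>m h'. h' \<in> A \<longrightarrow> cmod (m - l) \<le> \<rho> \<longrightarrow> (\<forall>z\<in>K. cmod (h' z - h z) \<le> \<rho>) \<longrightarrow>
       invertible_in K A (restrictK K (\<lambda>z. m - h' z))" by blast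
  qed
  then obtain \<rho> where \<rho>: "\<And>l. l \<in> C \<Longrightarrow> \<rho> l > 0"
    "\<And>l m h'. l \<in> C \<Longrightarrow> h' \<in> A \<Longrightarrow> cmod (m - l) \<le> \<rho> l \<Longrightarrow> (\<forall>z\<in>K. cmod (h' z - h z) \<le> \<rho> l) \<Longrightarrow>
       invertible_in K A (restrictK K (\<lambda>z. m - h' z))"
    by metis
  have "C \<subseteq> (\<Union>l\<in>C. ball l (\<rho> l))" using \<rho>(1) by force
  then obtain C' where C': "C' \<subseteq> C" "finite C'" "C \<subseteq> (\<Union>l\<in>C'. ball l (\<rho> l))"
    using compactE_image[OF C, of C "\<lambda>l. ball l (\<rho> l)"] by blast
  define r where "r = Min (insert 1 (\<rho> ` C'))"
  have r0: "r > 0" unfolding r_def using C' \<rho>(1) by (subst Min_gr_iff) auto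
  have rle: "r \<le> \<rho> l" if "l \<in> C'" for l unfolding r_def using C' that by (intro Min_le) auto
  show ?thesis
  proof (rule that[OF r0])
    fix h' assume h': "h' \<in> A" and b: "\<And>z. z \<in> K \<Longrightarrow> cmod (h' z - h z) \<le> r"
    show "spectrum_in K A h' \<inter> C = {}"
    proof (rule ccontr)
      assume "spectrum_in K A h' \<inter> C \<noteq> {}"
      then obtain m where m: "m \<in> C" "m \<in> spectrum_in K A h'" by blast
      then obtain l where l: "l \<in> C'" "m \<in> ball l (\<rho> l)" using C' by blast
      have "invertible_in K A (restrictK K (\<lambda>z. m - h' z))"
      proof (rule \<rho>(2)[of l])
        show "l \<in> C" using l C' by blast
        show "cmod (m - l) \<le> \<rho> l" using l by (simp add: dist_norm norm_minus_commute)
        show "\<forall>z\<in>K. cmod (h' z - h z) \<le> \<rho> l" using b rle[OF l(1)] by force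
      qed (rule h')
      then show False using m unfolding spectrum_in_def by simp
    qed
  qed
qed



definition wt :: "real \<Rightarrow> 'a::metric_space \<Rightarrow> 'a \<Rightarrow> real" where
  "wt \<delta> x z = max 0 (\<delta> - dist z x)"

definition pu :: "real \<Rightarrow> ('a::metric_space \<times> complex) set \<Rightarrow> 'a \<Rightarrow> complex" where
  "pu \<delta> G z = (\<Sum>p\<in>G. of_real (wt \<delta> (fst p) z) * snd p) / of_real (\<Sum>p\<in>G. wt \<delta> (fst p) z)"

definition famK :: "'a::metric_space set \<Rightarrow> 'a set \<Rightarrow> complex set \<Rightarrow> ('a \<Rightarrow> complex) set" where
  "famK K Q D = (\<lambda>(n,G). pu (1 / real (Suc n)) G) `
     {(n,G). finite G \<and> G \<subseteq> Q \<times> D \<and> (\<forall>z\<in>K. 0 < (\<Sum>p\<in>G. wt (1 / real (Suc n)) (fst p) z))}"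

lemma famK_countable:
  assumes "countable Q" "countable D"
  shows "countable (famK K Q D)"
proof -
  have "countable (Q \<times> D)" using assms by (simp add: countable_SIGMA)
  then have "countable {G. finite G \<and> G \<subseteq> Q \<times> D}" by (rule countable_Collect_finite_subset)
  then have "countable ((UNIV :: nat set) \<times> {G. finite G \<and> G \<subseteq> Q \<times> D})" by (simp add: countable_SIGMA)
  moreover have "{(n,G). finite G \<and> G \<subseteq> Q \<times> D \<and> (\<forall>z\<in>K. 0 < (\<Sum>p\<in>G. wt (1 / real (Suc n)) (fst p) z))}
     \<subseteq> (UNIV :: nat set) \<times> {G. finite G \<and> G \<subseteq> Q \<times> D}" by blast
  ultimately show ?thesis unfolding famK_def by (intro countable_image) (rule countable_subset)
qed

lemma famK_cont:
  assumes "p \<in> famK K Q D"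
  shows "continuous_on K p"
proof -
  obtain n G where p: "p = pu (1 / real (Suc n)) G" and pos: "\<forall>z\<in>K. 0 < (\<Sum>p\<in>G. wt (1 / real (Suc n)) (fst p) z)"
    using assms unfolding famK_def by auto
  have cw: "continuous_on K (\<lambda>z. wt \<delta> x z)" for \<delta> x
    unfolding wt_def by (intro continuous_intros)
  show ?thesis unfolding p pu_def
    apply (intro continuous_intros cw)
    using pos by (auto simp flip: of_real_sum)
qed

lemma avg_est:
  fixes w :: "'b \<Rightarrow> real" and a :: "'b \<Rightarrow> complex"
  assumes "finite G" "\<And>p. p \<in> G \<Longrightarrow> 0 \<le> w p" "0 < sum w G"
    "\<And>p. p \<in> G \<Longrightarrow> 0 < w p \<Longrightarrow> cmod (a p - c) \<le> \<epsilon>"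
  shows "cmod (c - (\<Sum>p\<in>G. of_real (w p) * a p) / of_real (sum w G)) \<le> \<epsilon>"
proof -
  have S0: "of_real (sum w G) \<noteq> (0::complex)" using assms(3) by (metis less_irrefl of_real_eq_0_iff)
  have e1: "(\<Sum>p\<in>G. of_real (w p) * (a p - c)) = (\<Sum>p\<in>G. of_real (w p) * a p) - of_real (sum w G) * c"
    by (simp add: right_diff_distrib sum_subtractf sum_distrib_right of_real_sum)
  have "(\<Sum>p\<in>G. of_real (w p) * a p) / of_real (sum w G) - c
        = (\<Sum>p\<in>G. of_real (w p) * (a p - c)) / of_real (sum w G)"
    unfolding e1 using S0 by (simp add: diff_divide_distrib)
  also have "cmod \<dots> \<le> (\<Sum>p\<in>G. w p * \<epsilon>) / sum w G"
  proof -
    have "cmod (\<Sum>p\<in>G. of_real (w p) * (a p - c)) \<le> (\<Sum>p\<in>G. cmod (of_real (w p) * (a p - c)))"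
      by (rule norm_sum)
    also have "\<dots> \<le> (\<Sum>p\<in>G. w p * \<epsilon>)"
    proof (rule sum_mono)
      fix p assume p: "p \<in> G"
      show "cmod (of_real (w p) * (a p - c)) \<le> w p * \<epsilon>"
      proof (cases "w p = 0")
        case True then show ?thesis by simp
      next
        case False
        then have "0 < w p" using assms(2)[OF p] by simp
        then show ?thesis using assms(4)[OF p] assms(2)[OF p]
          by (simp add: norm_mult mult_left_mono)
      qed
    qed
    finally have n1: "cmod (\<Sum>p\<in>G. of_real (w p) * (a p - c)) \<le> (\<Sum>p\<in>G. w p * \<epsilon>)" .
    have n2: "cmod (of_real (sum w G) :: complex) = sum w G"
      unfolding norm_of_real using assms(3) by simp
    show ?thesis unfolding norm_divide n2 by (intro divide_right_mono n1) (use assms(3) in simp)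
  qed
  also have "\<dots> = sum w G * \<epsilon> / sum w G" by (simp only: sum_distrib_right)
  also have "\<dots> = \<epsilon>" using assms(3) by simp
  finally show ?thesis by (metis norm_minus_commute)
qed

lemma famK_dense:
  fixes K :: "'a::metric_space set"
  assumes K: "compact K" and Q: "Q \<subseteq> K" "K \<subseteq> closure Q"
    and D: "\<And>x e. 0 < e \<Longrightarrow> \<exists>d\<in>D. dist d x < e"
    and h: "continuous_on K h" and e: "0 < \<epsilon>"
  shows "\<exists>p\<in>famK K Q D. \<forall>z\<in>K. cmod (h z - p z) \<le> \<epsilon>"
proof -
  have "\<exists>d>0. \<forall>x\<in>K. \<forall>y\<in>K. dist y x < d \<longrightarrow> dist (h y) (h x) < \<epsilon> / 2"
    using compact_uniformly_continuous[OF h K] half_gt_zero[OF e] unfolding uniformly_continuous_on_def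
    by blast
  then obtain d0 where d0: "d0 > 0" "\<And>x y. x \<in> K \<Longrightarrow> y \<in> K \<Longrightarrow> dist y x < d0 \<Longrightarrow> dist (h y) (h x) < \<epsilon> / 2"
    by blast
  obtain n :: nat where n: "1 / real (Suc n) < d0" using nat_approx_posE[OF d0(1)] by blast
  define \<delta> where "\<delta> = 1 / real (Suc n)"
  have \<delta>0: "\<delta> > 0" unfolding \<delta>_def by simp
  have "K \<subseteq> (\<Union>x\<in>Q. ball x \<delta>)"
  proof
    fix z assume "z \<in> K"
    then have "z \<in> closure Q" using Q by blast
    then obtain x where "x \<in> Q" "dist x z < \<delta>" using \<delta>0 closure_approachable by blast
    then show "z \<in> (\<Union>x\<in>Q. ball x \<delta>)" by (auto simp: dist_commute)
  qed
  then obtain F where F: "F \<subseteq> Q" "finite F" "K \<subseteq> (\<Union>x\<in>F. ball x \<delta>)"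
    using compactE_image[OF K, of Q "\<lambda>x. ball x \<delta>"] by blast
  have ex: "\<forall>x. \<exists>d. d \<in> D \<and> dist d (h x) < \<epsilon> / 2"
  proof
    fix x show "\<exists>d. d \<in> D \<and> dist d (h x) < \<epsilon> / 2" using D[of "\<epsilon>/2" "h x"] half_gt_zero[OF e] by blast
  qed
  obtain v where v0: "\<forall>x. v x \<in> D \<and> dist (v x) (h x) < \<epsilon> / 2" using choice[OF ex] by blast
  then have v: "\<And>x. v x \<in> D" "\<And>x. dist (v x) (h x) < \<epsilon> / 2" by blast+
  define G where "G = (\<lambda>x. (x, v x)) ` F"
  have Gfin: "finite G" using F unfolding G_def by simp
  have GQD: "G \<subseteq> Q \<times> D" using F v unfolding G_def by auto
  have wt0: "0 \<le> wt \<delta> x z" for x z unfolding wt_def by simp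
  have pos: "0 < (\<Sum>p\<in>G. wt \<delta> (fst p) z)" if z: "z \<in> K" for z
  proof -
    obtain x where x: "x \<in> F" "z \<in> ball x \<delta>" using F z by blast
    have "0 < wt \<delta> (fst (x, v x)) z" using x unfolding wt_def by (simp add: dist_commute)
    moreover have "(x, v x) \<in> G" using x unfolding G_def by blast
    ultimately show ?thesis using Gfin wt0 by (intro sum_pos2[where i="(x, v x)"]) auto
  qed
  have inF: "pu \<delta> G \<in> famK K Q D"
    unfolding famK_def
    by (rule image_eqI[of _ _ "(n, G)"]) (use Gfin GQD pos in \<open>simp_all add: \<delta>_def\<close>)
  show ?thesis
  proof (intro bexI[OF _ inF] ballI)
    fix z assume z: "z \<in> K"
    show "cmod (h z - pu \<delta> G z) \<le> \<epsilon>"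
      unfolding pu_def
    proof (rule avg_est[OF Gfin wt0 pos[OF z]])
      fix p assume p: "p \<in> G" and wp: "0 < wt \<delta> (fst p) z"
      then obtain x where x: "x \<in> F" "p = (x, v x)" unfolding G_def by blast
      have xK: "x \<in> K" using x F Q by blast
      have "dist z x < \<delta>" using wp x unfolding wt_def by (simp split: if_splits)
      then have "dist (h z) (h x) < \<epsilon> / 2" using d0(2)[OF xK z] n unfolding \<delta>_def by linarith
      moreover have "dist (v x) (h x) < \<epsilon> / 2" by (rule v)
      ultimately have "dist (v x) (h z) < \<epsilon>" using dist_triangle_half_l[of "v x" "h x" \<epsilon> "h z"]
        by (simp add: dist_commute)
      then show "cmod (snd p - h z) \<le> \<epsilon>" using x by (simp add: dist_norm)
    qed
  qed
qed



lemma restrictK_eq: "z \<in> K \<Longrightarrow> restrictK K g z = g z"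
  by (simp add: restrictK_def)

lemma f_cont:
  assumes ua: "uniform_algebra K A" and fA: "restrictK K g \<in> A"
  shows "continuous_on K g"
  using ua_cont[OF ua fA] by (rule continuous_on_cong[THEN iffD1, OF refl, rotated]) (simp add: restrictK_eq)

lemma meas_ball:
  fixes K :: "'a::{metric_space, second_countable_topology} set"
  assumes ua: "uniform_algebra K A" and fA: "\<forall>\<omega>\<in>space M. restrictK K (f \<omega>) \<in> A"
    and fm: "\<forall>z\<in>K. (\<lambda>\<omega>. f \<omega> z) \<in> borel_measurable M"
    and p: "continuous_on K p"
  shows "{\<omega>\<in>space M. \<forall>z\<in>K. cmod (f \<omega> z - p z) \<le> c} \<in> sets M"
proof -
  obtain Q where Q: "countable Q" "Q \<subseteq> K" "K \<subseteq> closure Q" using separable by blast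
  have cl: "closure Q \<subseteq> K"
    using Q(2) compact_imp_closed[OF ua_compact[OF ua]] by (rule closure_minimal)
  have "{\<omega>\<in>space M. \<forall>z\<in>K. cmod (f \<omega> z - p z) \<le> c} = {\<omega>\<in>space M. \<forall>z\<in>Q. cmod (f \<omega> z - p z) \<le> c}"
  proof (intro Collect_cong conj_cong refl iffI ballI)
    fix \<omega> z assume "\<forall>z\<in>K. cmod (f \<omega> z - p z) \<le> c" "z \<in> Q"
    then show "cmod (f \<omega> z - p z) \<le> c" using Q(2) by blast
  next
    fix \<omega> z assume \<omega>: "\<omega> \<in> space M" and b: "\<forall>z\<in>Q. cmod (f \<omega> z - p z) \<le> c" and z: "z \<in> K"
    have "continuous_on K (\<lambda>y. f \<omega> y - p y)"
      using f_cont[OF ua] fA \<omega> p by (intro continuous_intros) auto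
    then have "continuous_on (closure Q) (\<lambda>y. f \<omega> y - p y)" using cl continuous_on_subset by blast
    then show "cmod (f \<omega> z - p z) \<le> c"
      using b z Q(3) by (intro continuous_on_closure_norm_le) auto
  qed
  also have "\<dots> \<in> sets M"
  proof (rule sets.sets_Collect_countable_All'[OF _ Q(1)])
    fix z assume z: "z \<in> Q"
    then have m: "(\<lambda>\<omega>. f \<omega> z) \<in> borel_measurable M" using fm Q(2) by blast
    have "(\<lambda>\<omega>. cmod (f \<omega> z - p z)) \<in> borel_measurable M" using m by measurable
    then show "{\<omega>\<in>space M. cmod (f \<omega> z - p z) \<le> c} \<in> sets M" by measurable
  qed
  finally show ?thesis .
qed

lemma E_meas:
  fixes K :: "'a::{metric_space, second_countable_topology} set"
  assumes ua: "uniform_algebra K A" and fA: "\<forall>\<omega>\<in>space M. restrictK K (f \<omega>) \<in> A"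
    and fm: "\<forall>z\<in>K. (\<lambda>\<omega>. f \<omega> z) \<in> borel_measurable M"
    and C: "compact C"
  shows "{\<omega>\<in>space M. spectrum_in K A (restrictK K (f \<omega>)) \<inter> C = {}} \<in> sets M"
proof -
  obtain Q where Q: "countable Q" "Q \<subseteq> K" "K \<subseteq> closure Q" using separable by blast
  obtain D :: "complex set" where D: "countable D" "\<And>X. open X \<Longrightarrow> X \<noteq> {} \<Longrightarrow> \<exists>d\<in>D. d \<in> X"
    using countable_dense_exists by blast
  have Dd: "\<exists>d\<in>D. dist d x < e" if e0: "0 < e" for x e
  proof -
    obtain d where "d \<in> D" "d \<in> ball x e" using D(2)[of "ball x e"] e0 by auto
    then show ?thesis by (auto simp: dist_commute)
  qed
  define Fm where "Fm = famK K Q D"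
  have Fmc: "countable Fm" unfolding Fm_def by (rule famK_countable[OF Q(1) D(1)])
  define Good where "Good p n \<longleftrightarrow> (\<forall>h\<in>A. (\<forall>z\<in>K. cmod (h z - p z) \<le> 1 / real (Suc n)) \<longrightarrow>
      spectrum_in K A h \<inter> C = {})" for p and n :: nat
  define I where "I = {x \<in> Fm \<times> (UNIV :: nat set). Good (fst x) (snd x)}"
  have c2: "countable (Fm \<times> (UNIV :: nat set))" using Fmc by (simp add: countable_SIGMA)
  have "I \<subseteq> Fm \<times> (UNIV :: nat set)" unfolding I_def by blast
  then have Ic: "countable I" using c2 by (rule countable_subset)
  have "{\<omega>\<in>space M. spectrum_in K A (restrictK K (f \<omega>)) \<inter> C = {}}
      = {\<omega>\<in>space M. \<exists>x\<in>I. \<forall>z\<in>K. cmod (f \<omega> z - fst x z) \<le> 1 / real (Suc (snd x))}"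
  proof (intro Collect_cong conj_cong refl iffI)
    fix \<omega> assume \<omega>: "\<omega> \<in> space M" and dis: "spectrum_in K A (restrictK K (f \<omega>)) \<inter> C = {}"
    have hA: "restrictK K (f \<omega>) \<in> A" using fA \<omega> by blast
    obtain r where r: "r > 0"
      "\<And>h'. h' \<in> A \<Longrightarrow> (\<And>z. z \<in> K \<Longrightarrow> cmod (h' z - restrictK K (f \<omega>) z) \<le> r) \<Longrightarrow> spectrum_in K A h' \<inter> C = {}"
      using spec_usc[OF ua hA C dis] by blast
    obtain n :: nat where n: "1 / real (Suc n) < r / 2" using nat_approx_posE[of "r/2"] r(1) by auto
    obtain p where p: "p \<in> Fm" "\<forall>z\<in>K. cmod (restrictK K (f \<omega>) z - p z) \<le> 1 / real (Suc n)"
      using famK_dense[OF ua_compact[OF ua] Q(2,3) Dd ua_cont[OF ua hA], of "1 / real (Suc n)"]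
      unfolding Fm_def by auto
    have "Good p n" unfolding Good_def
    proof (intro ballI impI)
      fix h assume h: "h \<in> A" "\<forall>z\<in>K. cmod (h z - p z) \<le> 1 / real (Suc n)"
      show "spectrum_in K A h \<inter> C = {}"
      proof (rule r(2)[OF h(1)])
        fix z assume z: "z \<in> K"
        have "cmod (h z - restrictK K (f \<omega>) z) \<le> cmod (h z - p z) + cmod (restrictK K (f \<omega>) z - p z)"
          using norm_triangle_ineq4[of "h z - p z" "restrictK K (f \<omega>) z - p z"] by simp
        also have "\<dots> \<le> r" using h(2) p(2) z n by fastforce
        finally show "cmod (h z - restrictK K (f \<omega>) z) \<le> r" .
      qed
    qed
    then have "(p, n) \<in> I" unfolding I_def using p(1) by simp
    moreover have "\<forall>z\<in>K. cmod (f \<omega> z - p z) \<le> 1 / real (Suc n)" using p(2) by (simp add: restrictK_eq)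
    ultimately show "\<exists>x\<in>I. \<forall>z\<in>K. cmod (f \<omega> z - fst x z) \<le> 1 / real (Suc (snd x))" by force
  next
    fix \<omega> assume \<omega>: "\<omega> \<in> space M" and ex: "\<exists>x\<in>I. \<forall>z\<in>K. cmod (f \<omega> z - fst x z) \<le> 1 / real (Suc (snd x))"
    then obtain p n where pn: "(p, n) \<in> I" "\<forall>z\<in>K. cmod (f \<omega> z - p z) \<le> 1 / real (Suc n)" by force
    have hA: "restrictK K (f \<omega>) \<in> A" using fA \<omega> by blast
    have "Good p n" using pn(1) unfolding I_def by simp
    then show "spectrum_in K A (restrictK K (f \<omega>)) \<inter> C = {}"
      unfolding Good_def using hA pn(2) by (simp add: restrictK_eq)
  qed
  also have "\<dots> \<in> sets M"
  proof (rule sets.sets_Collect_countable_Ex'[OF _ Ic])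
    fix x assume "x \<in> I"
    then have "fst x \<in> famK K Q D" unfolding I_def Fm_def by auto
    then have "continuous_on K (fst x)" by (rule famK_cont)
    then show "{\<omega>\<in>space M. \<forall>z\<in>K. cmod (f \<omega> z - fst x z) \<le> 1 / real (Suc (snd x))} \<in> sets M"
      by (rule meas_ball[OF ua fA fm])
  qed
  finally show ?thesis .
qed



lemma infdist_lessE:
  assumes "Y \<noteq> {}" "infdist x Y < e"
  obtains y where "y \<in> Y" "dist x y < e"
proof -
  have bb: "bdd_below ((\<lambda>a. dist x a) ` Y)" by (rule bdd_belowI[of _ 0]) auto
  have "(INF a\<in>Y. dist x a) < e" using assms by (simp add: infdist_notempty)
  then show ?thesis using cINF_less_iff[OF assms(1) bb] that by blast
qed

lemma le_of_all_nat:
  fixes a q :: real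
  assumes "\<And>k::nat. a \<le> q + 1 / real (Suc k)"
  shows "a \<le> q"
proof (rule ccontr)
  assume "\<not> a \<le> q"
  then obtain k :: nat where "1 / real (Suc k) < a - q" using nat_approx_posE[of "a - q"] by auto
  then show False using assms[of k] by linarith
qed

lemma nc_bdd:
  assumes "X \<in> nonempty_compacts"
  shows "bdd_above ((\<lambda>x. infdist x Y) ` X)"
proof -
  have "compact X" using assms by (simp add: nonempty_compacts_def)
  then have "compact ((\<lambda>x. infdist x Y) ` X)"
    by (intro compact_continuous_image continuous_intros)
  then show ?thesis by (intro bounded_imp_bdd_above compact_imp_bounded)
qed

lemma hausdist_le_iff:
  assumes X: "X \<in> nonempty_compacts" and Y: "Y \<in> nonempty_compacts"
  shows "hausdist X Y \<le> q \<longleftrightarrow> (\<forall>x\<in>X. infdist x Y \<le> q) \<and> (\<forall>y\<in>Y. infdist y X \<le> q)"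
proof -
  have ne: "X \<noteq> {}" "Y \<noteq> {}" using X Y by (auto simp: nonempty_compacts_def)
  show ?thesis unfolding hausdist_def max_def
    using cSUP_le_iff[OF ne(1) nc_bdd[OF X, of Y], of q] cSUP_le_iff[OF ne(2) nc_bdd[OF Y, of X], of q]
    by auto
qed

lemma hausdist_sym: "hausdist X Y = hausdist Y X"
  unfolding hausdist_def by (simp add: max.commute)

lemma hausdist_triangle:
  assumes X: "X \<in> nonempty_compacts" and Y: "Y \<in> nonempty_compacts" and Z: "Z \<in> nonempty_compacts"
  shows "hausdist X Z \<le> hausdist X Y + hausdist Y Z"
proof -
  have ne: "X \<noteq> {}" "Y \<noteq> {}" "Z \<noteq> {}" using X Y Z by (auto simp: nonempty_compacts_def)
  define a where "a = hausdist X Y"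
  define b where "b = hausdist Y Z"
  have XY: "\<forall>x\<in>X. infdist x Y \<le> a" "\<forall>y\<in>Y. infdist y X \<le> a"
    using hausdist_le_iff[OF X Y, of a] unfolding a_def by auto
  have YZ: "\<forall>y\<in>Y. infdist y Z \<le> b" "\<forall>z\<in>Z. infdist z Y \<le> b"
    using hausdist_le_iff[OF Y Z, of b] unfolding b_def by auto
  have gen: "infdist x W \<le> c + d"
    if W: "\<forall>y\<in>Y. infdist y W \<le> c" and x: "infdist x Y \<le> d" for x W c d
  proof -
    have "infdist x W - c \<le> infdist x Y"
      unfolding infdist_notempty[OF ne(2)]
    proof (rule cINF_greatest[OF ne(2)])
      fix y assume "y \<in> Y"
      then have "infdist y W \<le> c" using W by blast
      then show "infdist x W - c \<le> dist x y"
        using infdist_triangle[of x W y] by linarith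
    qed
    then show ?thesis using x by linarith
  qed
  have "\<forall>x\<in>X. infdist x Z \<le> a + b" using gen[OF YZ(1)] XY(1) by (simp add: add.commute)
  moreover have "\<forall>z\<in>Z. infdist z X \<le> a + b" using gen[OF XY(2)] YZ(2) by simp
  ultimately show ?thesis unfolding a_def b_def using hausdist_le_iff[OF X Z] by blast
qed

lemma finite_nc: "finite X \<Longrightarrow> X \<noteq> {} \<Longrightarrow> X \<in> nonempty_compacts"
  by (simp add: nonempty_compacts_def finite_imp_compact)

lemma hausdist_dense:
  assumes Y: "Y \<in> nonempty_compacts" and D: "\<And>x e. 0 < e \<Longrightarrow> \<exists>d\<in>D. dist d x < e" and e: "0 < e"
  shows "\<exists>X. finite X \<and> X \<noteq> {} \<and> X \<subseteq> D \<and> hausdist X Y \<le> e"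
proof -
  have cY: "compact Y" and nY: "Y \<noteq> {}" using Y by (auto simp: nonempty_compacts_def)
  have "Y \<subseteq> (\<Union>y\<in>Y. ball y (e/2))" using e by force
  then obtain F where F: "F \<subseteq> Y" "finite F" "Y \<subseteq> (\<Union>y\<in>F. ball y (e/2))"
    using compactE_image[OF cY, of Y "\<lambda>y. ball y (e/2)"] by blast
  have ex: "\<forall>y. \<exists>d. d \<in> D \<and> dist d y < e/2"
  proof
    fix y show "\<exists>d. d \<in> D \<and> dist d y < e/2" using D[of "e/2" y] half_gt_zero[OF e] by blast
  qed
  obtain v where v: "\<forall>y. v y \<in> D \<and> dist (v y) y < e/2" using choice[OF ex] by blast
  define X where "X = v ` F"
  have nF: "F \<noteq> {}" using F(3) nY by blast
  have fX: "finite X" "X \<noteq> {}" "X \<subseteq> D" using F(2) nF v unfolding X_def by auto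
  have "hausdist X Y \<le> e"
  proof (subst hausdist_le_iff[OF finite_nc[OF fX(1,2)] Y], intro conjI ballI)
    fix x assume "x \<in> X"
    then obtain y where y: "y \<in> F" "x = v y" unfolding X_def by blast
    have yY: "y \<in> Y" using y F(1) by blast
    have "infdist x Y \<le> dist x y" using infdist_le[OF yY] .
    also have "dist x y < e/2" using v y(2) by blast
    also have "e/2 \<le> e" using e by simp
    finally show "infdist x Y \<le> e" by simp
  next
    fix z assume "z \<in> Y"
    then obtain y where y: "y \<in> F" "z \<in> ball y (e/2)" using F(3) by blast
    have vX: "v y \<in> X" using y unfolding X_def by blast
    have "infdist z X \<le> dist z (v y)" using infdist_le[OF vX] .
    also have "\<dots> \<le> dist z y + dist y (v y)" by (rule dist_triangle)
    also have "\<dots> \<le> e"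
    proof -
      have "dist (v y) y < e/2" using v by blast
      moreover have "dist z y < e/2" using y(2) by (simp add: dist_commute)
      ultimately show ?thesis by (simp add: dist_commute)
    qed
    finally show "infdist z X \<le> e" .
  qed
  then show ?thesis using fX by blast
qed



lemma evA:
  fixes F :: "'w \<Rightarrow> complex set"
  assumes F1: "\<forall>\<omega>\<in>space M. F \<omega> \<in> nonempty_compacts"
    and F2: "\<And>C. compact C \<Longrightarrow> {\<omega>\<in>space M. F \<omega> \<inter> C = {}} \<in> sets M"
  shows "{\<omega>\<in>space M. \<forall>y\<in>F \<omega>. infdist y X \<le> q} \<in> sets M"
proof -
  define C where "C k = {y. q + 1 / real (Suc k) \<le> infdist y X} \<inter> cball 0 (real k)" for k
  have cC: "compact (C k)" for k
  proof -
    have "closed {y. q + 1 / real (Suc k) \<le> infdist y X}"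
      by (intro closed_Collect_le continuous_intros)
    then show ?thesis unfolding C_def by (intro closed_Int_compact) auto
  qed
  have "{\<omega>\<in>space M. \<forall>y\<in>F \<omega>. infdist y X \<le> q} = {\<omega>\<in>space M. \<forall>k. F \<omega> \<inter> C k = {}}"
  proof (intro Collect_cong conj_cong refl iffI allI ballI)
    fix \<omega> k assume a: "\<forall>y\<in>F \<omega>. infdist y X \<le> q"
    show "F \<omega> \<inter> C k = {}"
    proof (rule ccontr)
      assume "F \<omega> \<inter> C k \<noteq> {}"
      then obtain y where y: "y \<in> F \<omega>" "q + 1 / real (Suc k) \<le> infdist y X" unfolding C_def by blast
      have "0 < 1 / real (Suc k)" by simp
      moreover have "infdist y X \<le> q" using a y(1) by blast
      ultimately show False using y(2) by linarith
    qed
  next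
    fix \<omega> y assume a: "\<forall>k. F \<omega> \<inter> C k = {}" and y: "y \<in> F \<omega>"
    show "infdist y X \<le> q"
    proof (rule ccontr)
      assume "\<not> infdist y X \<le> q"
      then obtain k1 :: nat where k1: "1 / real (Suc k1) < infdist y X - q"
        using nat_approx_posE[of "infdist y X - q"] by auto
      obtain k2 :: nat where k2: "norm y \<le> real k2" using real_arch_simple by blast
      define k where "k = max k1 k2"
      have "1 / real (Suc k) \<le> 1 / real (Suc k1)" unfolding k_def
        by (intro divide_left_mono) auto
      moreover have "norm y \<le> real k" using k2 unfolding k_def by linarith
      ultimately have "y \<in> C k" using k1 unfolding C_def by (auto simp: dist_norm)
      then show False using a y by blast
    qed
  qed
  also have "\<dots> \<in> sets M"
    by (rule sets.sets_Collect_countable_All) (rule F2[OF cC])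
  finally show ?thesis .
qed

lemma evB:
  fixes F :: "'w \<Rightarrow> complex set"
  assumes F1: "\<forall>\<omega>\<in>space M. F \<omega> \<in> nonempty_compacts"
    and F2: "\<And>C. compact C \<Longrightarrow> {\<omega>\<in>space M. F \<omega> \<inter> C = {}} \<in> sets M"
  shows "{\<omega>\<in>space M. infdist x (F \<omega>) \<le> q} \<in> sets M"
proof -
  have "{\<omega>\<in>space M. infdist x (F \<omega>) \<le> q} = {\<omega>\<in>space M. \<forall>k::nat. \<not> (F \<omega> \<inter> cball x (q + 1 / real (Suc k)) = {})}"
  proof (intro Collect_cong conj_cong refl iffI allI)
    fix \<omega> k assume \<omega>: "\<omega> \<in> space M" and a: "infdist x (F \<omega>) \<le> q"
    have ne: "F \<omega> \<noteq> {}" using F1 \<omega> by (auto simp: nonempty_compacts_def)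
    have "0 < 1 / real (Suc k)" by simp
    then have "infdist x (F \<omega>) < q + 1 / real (Suc k)" using a by linarith
    then obtain y where y: "y \<in> F \<omega>" "dist x y < q + 1 / real (Suc k)" using infdist_lessE[OF ne] by blast
    then have "y \<in> cball x (q + 1 / real (Suc k))" by (simp add: mem_cball)
    then show "\<not> (F \<omega> \<inter> cball x (q + 1 / real (Suc k)) = {})" using y(1) by blast
  next
    fix \<omega> assume a: "\<forall>k::nat. \<not> (F \<omega> \<inter> cball x (q + 1 / real (Suc k)) = {})"
    show "infdist x (F \<omega>) \<le> q"
    proof (rule le_of_all_nat)
      fix k :: nat
      obtain y where "y \<in> F \<omega>" "y \<in> cball x (q + 1 / real (Suc k))" using a by blast
      then have "y \<in> F \<omega>" "dist x y \<le> q + 1 / real (Suc k)" by (simp_all add: mem_cball)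
      then show "infdist x (F \<omega>) \<le> q + 1 / real (Suc k)" by (intro infdist_le2)
    qed
  qed
  also have "\<dots> \<in> sets M"
  proof (rule sets.sets_Collect_countable_All)
    fix k :: nat
    show "{\<omega>\<in>space M. \<not> (F \<omega> \<inter> cball x (q + 1 / real (Suc k)) = {})} \<in> sets M"
      by (rule sets.sets_Collect_neg) (rule F2, rule compact_cball)
  qed
  finally show ?thesis .
qed

lemma evH:
  fixes F :: "'w \<Rightarrow> complex set"
  assumes F1: "\<forall>\<omega>\<in>space M. F \<omega> \<in> nonempty_compacts"
    and F2: "\<And>C. compact C \<Longrightarrow> {\<omega>\<in>space M. F \<omega> \<inter> C = {}} \<in> sets M"
    and X: "finite X" "X \<noteq> {}"
  shows "{\<omega>\<in>space M. hausdist X (F \<omega>) < r} \<in> sets M"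
proof -
  have "{\<omega>\<in>space M. hausdist X (F \<omega>) < r} =
     {\<omega>\<in>space M. \<exists>k::nat. (\<forall>x\<in>X. infdist x (F \<omega>) \<le> r - 1 / real (Suc k)) \<and>
                         (\<forall>y\<in>F \<omega>. infdist y X \<le> r - 1 / real (Suc k))}"
  proof (intro Collect_cong conj_cong refl)
    fix \<omega> assume \<omega>: "\<omega> \<in> space M"
    have iff: "hausdist X (F \<omega>) \<le> s \<longleftrightarrow> (\<forall>x\<in>X. infdist x (F \<omega>) \<le> s) \<and> (\<forall>y\<in>F \<omega>. infdist y X \<le> s)" for s
      using hausdist_le_iff[OF finite_nc[OF X] ] F1 \<omega> by blast
    show "hausdist X (F \<omega>) < r \<longleftrightarrow> (\<exists>k::nat. (\<forall>x\<in>X. infdist x (F \<omega>) \<le> r - 1 / real (Suc k)) \<and>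
                         (\<forall>y\<in>F \<omega>. infdist y X \<le> r - 1 / real (Suc k)))"
      unfolding iff[symmetric]
    proof
      assume "hausdist X (F \<omega>) < r"
      then obtain k :: nat where "1 / real (Suc k) < r - hausdist X (F \<omega>)"
        using nat_approx_posE[of "r - hausdist X (F \<omega>)"] by auto
      then show "\<exists>k::nat. hausdist X (F \<omega>) \<le> r - 1 / real (Suc k)" by (intro exI[of _ k]) linarith
    next
      assume "\<exists>k::nat. hausdist X (F \<omega>) \<le> r - 1 / real (Suc k)"
      then obtain k :: nat where "hausdist X (F \<omega>) \<le> r - 1 / real (Suc k)" by blast
      moreover have "0 < 1 / real (Suc k)" by simp
      ultimately show "hausdist X (F \<omega>) < r" by linarith
    qed
  qed
  also have "\<dots> \<in> sets M"
  proof (rule sets.sets_Collect_countable_Ex, rule sets.sets_Collect_conj)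
    fix k :: nat
    show "{\<omega>\<in>space M. \<forall>x\<in>X. infdist x (F \<omega>) \<le> r - 1 / real (Suc k)} \<in> sets M"
      by (rule sets.sets_Collect_countable_All'[OF _ countable_finite[OF X(1)]]) (rule evB[OF F1 F2])
    show "{\<omega>\<in>space M. \<forall>y\<in>F \<omega>. infdist y X \<le> r - 1 / real (Suc k)} \<in> sets M"
      by (rule evA[OF F1 F2])
  qed
  finally show ?thesis .
qed

lemma abstract_meas:
  fixes F :: "'w \<Rightarrow> complex set"
  assumes F1: "\<forall>\<omega>\<in>space M. F \<omega> \<in> nonempty_compacts"
    and F2: "\<And>C. compact C \<Longrightarrow> {\<omega>\<in>space M. F \<omega> \<inter> C = {}} \<in> sets M"
  shows "F \<in> measurable M hausdorff_borel"
  unfolding hausdorff_borel_def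
proof (rule measurable_measure_of)
  show "{U. hausdorff_open U} \<subseteq> Pow nonempty_compacts" unfolding hausdorff_open_def by blast
  show "F \<in> space M \<rightarrow> nonempty_compacts" using F1 by blast
  fix U assume "U \<in> {U. hausdorff_open U}"
  then have U: "hausdorff_open U" by simp
  obtain D :: "complex set" where D: "countable D" "\<And>X. open X \<Longrightarrow> X \<noteq> {} \<Longrightarrow> \<exists>d\<in>D. d \<in> X"
    using countable_dense_exists by blast
  have Dd: "\<exists>d\<in>D. dist d x < e" if e0: "0 < e" for x e
  proof -
    obtain d where "d \<in> D" "d \<in> ball x e" using D(2)[of "ball x e"] e0 by auto
    then show ?thesis by (auto simp: dist_commute)
  qed
  define I where "I = {p \<in> {X. finite X \<and> X \<subseteq> D} \<times> (UNIV :: nat set). fst p \<noteq> {} \<and>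
      (\<forall>Z\<in>nonempty_compacts. hausdist (fst p) Z < 1 / real (Suc (snd p)) \<longrightarrow> Z \<in> U)}"
  have c1: "countable ({X. finite X \<and> X \<subseteq> D} \<times> (UNIV :: nat set))"
    using countable_Collect_finite_subset[OF D(1)] by (simp add: countable_SIGMA)
  have "I \<subseteq> {X. finite X \<and> X \<subseteq> D} \<times> (UNIV :: nat set)" unfolding I_def by blast
  then have Ic: "countable I" using c1 by (rule countable_subset)
  have "F -` U \<inter> space M = {\<omega>\<in>space M. \<exists>p\<in>I. hausdist (fst p) (F \<omega>) < 1 / real (Suc (snd p))}"
  proof (intro set_eqI iffI)
    fix \<omega> assume "\<omega> \<in> F -` U \<inter> space M"
    then have \<omega>: "\<omega> \<in> space M" "F \<omega> \<in> U" by auto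
    have Fnc: "F \<omega> \<in> nonempty_compacts" using F1 \<omega> by blast
    obtain e where e: "e > 0" "\<forall>Y\<in>nonempty_compacts. hausdist (F \<omega>) Y < e \<longrightarrow> Y \<in> U"
      using U \<omega>(2) unfolding hausdorff_open_def by blast
    obtain k :: nat where k: "1 / real (Suc k) < e / 2" using nat_approx_posE[of "e/2"] e(1) by auto
    have h0: "0 < 1 / (2 * real (Suc k))" by simp
    obtain X where X: "finite X" "X \<noteq> {}" "X \<subseteq> D" "hausdist X (F \<omega>) \<le> 1 / (2 * real (Suc k))"
      using hausdist_dense[OF Fnc Dd h0] by blast
    have Xnc: "X \<in> nonempty_compacts" using finite_nc[OF X(1,2)] .
    have lt: "hausdist X (F \<omega>) < 1 / real (Suc k)"
    proof -
      have "1 / (2 * real (Suc k)) < 1 / real (Suc k)" by (intro divide_strict_left_mono) auto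
      then show ?thesis using X(4) by linarith
    qed
    have "(X, k) \<in> I" unfolding I_def
    proof (clarsimp simp: X(1,2,3))
      fix Z assume Z: "Z \<in> nonempty_compacts" "hausdist X Z < 1 / (1 + real k)"
      have "hausdist (F \<omega>) Z \<le> hausdist (F \<omega>) X + hausdist X Z"
        by (rule hausdist_triangle[OF Fnc Xnc Z(1)])
      also have "\<dots> < e" using lt Z(2) k hausdist_sym[of X "F \<omega>"] by simp
      finally show "Z \<in> U" using e(2) Z(1) by blast
    qed
    then show "\<omega> \<in> {\<omega>\<in>space M. \<exists>p\<in>I. hausdist (fst p) (F \<omega>) < 1 / real (Suc (snd p))}"
      using \<omega>(1) lt by force
  next
    fix \<omega> assume "\<omega> \<in> {\<omega>\<in>space M. \<exists>p\<in>I. hausdist (fst p) (F \<omega>) < 1 / real (Suc (snd p))}"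
    then obtain p where \<omega>: "\<omega> \<in> space M" and p: "p \<in> I" "hausdist (fst p) (F \<omega>) < 1 / real (Suc (snd p))"
      by blast
    have "F \<omega> \<in> U" using p F1 \<omega> unfolding I_def by blast
    then show "\<omega> \<in> F -` U \<inter> space M" using \<omega> by blast
  qed
  also have "\<dots> \<in> sets M"
  proof (rule sets.sets_Collect_countable_Ex'[OF _ Ic])
    fix p assume "p \<in> I"
    then have fp: "finite (fst p)" "fst p \<noteq> {}" unfolding I_def by auto
    show "{\<omega>\<in>space M. hausdist (fst p) (F \<omega>) < 1 / real (Suc (snd p))} \<in> sets M"
      using evH[OF F1 F2 fp] by blast
  qed
  finally show "F -` U \<inter> space M \<in> sets M" .
qed


theorem proposition6p7:
  fixes M :: "'w measure"
    and K :: "(complex ^ 'n) set"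
    and A :: "(complex ^ 'n \<Rightarrow> complex) set"
    and f :: "'w \<Rightarrow> complex ^ 'n \<Rightarrow> complex"
  assumes "compact K"
    and "uniform_algebra K A"
    and "metrizable_space (gelfand_topology K A)"
    and "separable_space (gelfand_topology K A)"
    and "\<forall>\<omega>\<in>space M. restrictK K (f \<omega>) \<in> A"
    and "\<forall>z\<in>K. (\<lambda>\<omega>. f \<omega> z) \<in> borel_measurable M"
  shows "random_compact_set M (\<lambda>\<omega>. spectrum_in K A (restrictK K (f \<omega>)))"
  unfolding random_compact_set_def
proof (rule abstract_meas)
  show "\<forall>\<omega>\<in>space M. spectrum_in K A (restrictK K (f \<omega>)) \<in> nonempty_compacts"
    using spec_nc[OF assms(2)] assms(5) by blast
  fix C :: "complex set" assume C: "compact C"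
  show "{\<omega>\<in>space M. spectrum_in K A (restrictK K (f \<omega>)) \<inter> C = {}} \<in> sets M"
    by (rule E_meas[OF assms(2) assms(5) assms(6) C])
qed

end
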